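(* Let $\mathcal{W}$ be the weight space of an MLP with hidden dimensions $d_1,\dots,d_{L-1}$ and let $G=S_{d_1}\times\dots\times S_{d_{L-1}}$ act on $\mathcal{W}$ by the (orthonormal, linear) neuron-permutation action described in the context. Let $p(\boldsymbol{\omega})$ be a $G$-invariant prior density, and let the likelihood $p(\mathbf{Y}\mid\mathbf{X},\boldsymbol{\omega})$ of a dataset $(\mathbf{X},\mathbf{Y})$ be $G$-invariant in $\boldsymbol{\omega}$ (as holds when it depends on $\boldsymbol{\omega}$ only through the network outputs $\mathbf{f}^{\boldsymbol{\omega}}(\mathbf{x}_i)$). Let $q_\theta(\boldsymbol{\omega})$ be a variational density on $\mathcal{W}$, and define its symmetrization $q_\theta^G(\boldsymbol{\omega})=\frac{1}{|G|}\sum_{g\in G}q_\theta(g^{-1}\cdot\boldsymbol{\omega})$ and the ELBOs $$\mathcal{L}_{\mathrm{VI}}(\theta)=\mathbb{E}_{\boldsymbol{\omega}\sim q_\theta}\log p(\mathbf{Y}\mid\mathbf{X},\boldsymbol{\omega})-\mathrm{KL}(q_\theta\,\|\,p),\qquad \mathcal{L}^G_{\mathrm{VI}}(\theta)=\mathbb{E}_{\boldsymbol{\omega}\sim q^G_\theta}\log p(\mathbf{Y}\mid\mathbf{X},\boldsymbol{\omega})-\mathrm{KL}(q^G_\theta\,\|\,p).$$ Consider the joint distribution of $(g,\boldsymbol{\omega})\in G\times\mathcal{W}$ given by $q_\theta^G(g,\boldsymbol{\omega})=\frac{1}{|G|}q_\theta(g^{-1}\cdot\boldsymbol{\omega})$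 (so $g$ is uniform on $G$ and $\boldsymbol{\omega}\mid g$ has density $q_\theta(g^{-1}\cdot\boldsymbol{\omega})$), whose $\boldsymbol{\omega}$-marginal is $q^G_\theta$. Then (assuming all quantities involved are finite) $$\mathcal{L}^G_{\mathrm{VI}}(\theta)=\mathcal{L}_{\mathrm{VI}}(\theta)+H(q^G_\theta)-H(q_\theta)=\mathcal{L}_{\mathrm{VI}}(\theta)+I(g;\boldsymbol{\omega}),$$ where $H$ denotes differential entropy and $I(g;\boldsymbol{\omega})$ is the mutual information of $g$ and $\boldsymbol{\omega}$ under $q_\theta^G(g,\boldsymbol{\omega})$.
   Context: The MLP weight space is $\mathcal{W}=\bigoplus_{l=1}^L(\mathbb{R}^{d_l\times d_{l-1}}\oplus\mathbb{R}^{d_l})$ with $\boldsymbol{\omega}=(\mathbf{W}_1,\dots,\mathbf{W}_L,\mathbf{b}_1,\dots,\mathbf{b}_L)$ and Euclidean norm. For $g=(\tau_1,\dots,\tau_{L-1})\in G$ with permutation matrices $\mathbf{P}_{\tau_l}$, $g\cdot\boldsymbol{\omega}$ has $\mathbf{W}_1'=\mathbf{P}_{\tau_1}^\top\mathbf{W}_1$, $\mathbf{b}_1'=\mathbf{P}_{\tau_1}^\top\mathbf{b}_1$; $\mathbf{W}_l'=\mathbf{P}_{\tau_l}^\top\mathbf{W}_l\mathbf{P}_{\tau_{l-1}}$, $\mathbf{b}_l'=\mathbf{P}_{\tau_l}^\top\mathbf{b}_l$ for $2\le l\le L-1$; $\mathbf{W}_L'=\mathbf{W}_L\mathbf{P}_{\tau_{L-1}}$,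 $\mathbf{b}_L'=\mathbf{b}_L$. This is a linear norm-preserving action. A function or density $h$ on $\mathcal{W}$ is $G$-invariant if $h(g\cdot\boldsymbol{\omega})=h(\boldsymbol{\omega})$ for all $g\in G,\boldsymbol{\omega}\in\mathcal{W}$. All distributions have densities. *)

theory Defs
  imports "HOL-Probability.Probability" "HOL-Combinatorics.Permutations"
begin

text \<open>Coordinates of the MLP weight space: Wc l i j is the entry (i,j) of W_l,
  Bc l i is the entry i of b_l (all indices 0-based, layers 1..L).\<close>
datatype coord = Wc nat nat nat | Bc nat nat

definition mlp_coords :: "(nat \<Rightarrow> nat) \<Rightarrow> nat \<Rightarrow> coord set" where
  "mlp_coords d L =
     {Wc l i j | l i j. 1 \<le> l \<and> l \<le> L \<and> i < d l \<and> j < d (l - 1)} \<union>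
     {Bc l i | l i. 1 \<le> l \<and> l \<le> L \<and> i < d l}"

definition mlp_space :: "(nat \<Rightarrow> nat) \<Rightarrow> nat \<Rightarrow> (coord \<Rightarrow> real) measure" where
  "mlp_space d L = (\<Pi>\<^sub>M c\<in>mlp_coords d L. lborel)"

text \<open>The group G = S_{d_1} x ... x S_{d_{L-1}}: tau l is a permutation of {..<d l}
  for 1 <= l <= L-1, and tau l = id otherwise (so tau 0 = tau L = id).\<close>
definition perm_group :: "(nat \<Rightarrow> nat) \<Rightarrow> nat \<Rightarrow> (nat \<Rightarrow> nat \<Rightarrow> nat) set" where
  "perm_group d L = {\<tau>. (\<forall>l. (1 \<le> l \<and> l < L \<longrightarrow> \<tau> l permutes {..<d l}) \<and>
                              (\<not> (1 \<le> l \<and> l < L) \<longrightarrow> \<tau> l = id))}"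

definition perm_inv :: "(nat \<Rightarrow> nat \<Rightarrow> nat) \<Rightarrow> (nat \<Rightarrow> nat \<Rightarrow> nat)" where
  "perm_inv \<tau> = (\<lambda>l. inv (\<tau> l))"

text \<open>Neuron-permutation action, with (P_tau)_{k i} = [k = tau i]:
  W_l' = P_{tau_l}^T W_l P_{tau_{l-1}}, i.e. W_l'[i,j] = W_l[tau_l i, tau_{l-1} j];
  b_l'[i] = b_l[tau_l i] (with tau_0 = tau_L = id).\<close>
definition act :: "(nat \<Rightarrow> nat) \<Rightarrow> nat \<Rightarrow> (nat \<Rightarrow> nat \<Rightarrow> nat) \<Rightarrow> (coord \<Rightarrow> real) \<Rightarrow> (coord \<Rightarrow> real)" where
  "act d L \<tau> \<omega> = restrict (\<lambda>c. case c of
       Wc l i j \<Rightarrow> \<omega> (Wc l (\<tau> l i) (\<tau> (l - 1) j))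
     | Bc l i \<Rightarrow> \<omega> (Bc l (\<tau> l i))) (mlp_coords d L)"

definition G_invariant :: "(nat \<Rightarrow> nat) \<Rightarrow> nat \<Rightarrow> ((coord \<Rightarrow> real) \<Rightarrow> real) \<Rightarrow> bool" where
  "G_invariant d L h \<longleftrightarrow>
     (\<forall>\<tau>\<in>perm_group d L. \<forall>\<omega>\<in>space (mlp_space d L). h (act d L \<tau> \<omega>) = h \<omega>)"

definition sym_density :: "(nat \<Rightarrow> nat) \<Rightarrow> nat \<Rightarrow> ((coord \<Rightarrow> real) \<Rightarrow> real) \<Rightarrow> (coord \<Rightarrow> real) \<Rightarrow> real" where
  "sym_density d L q \<omega> =
     (1 / real (card (perm_group d L))) * (\<Sum>\<tau>\<in>perm_group d L. q (act d L (perm_inv \<tau>) \<omega>))"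

definition joint_density :: "(nat \<Rightarrow> nat) \<Rightarrow> nat \<Rightarrow> ((coord \<Rightarrow> real) \<Rightarrow> real) \<Rightarrow> (nat \<Rightarrow> nat \<Rightarrow> nat) \<Rightarrow> (coord \<Rightarrow> real) \<Rightarrow> real" where
  "joint_density d L q \<tau> \<omega> = q (act d L (perm_inv \<tau>) \<omega>) / real (card (perm_group d L))"

definition diff_entropy :: "'a measure \<Rightarrow> ('a \<Rightarrow> real) \<Rightarrow> real" where
  "diff_entropy M q = - (\<integral>x. q x * ln (q x) \<partial>M)"

definition KL_dens :: "'a measure \<Rightarrow> ('a \<Rightarrow> real) \<Rightarrow> ('a \<Rightarrow> real) \<Rightarrow> real" where
  "KL_dens M q p = (\<integral>x. q x * ln (q x / p x) \<partial>M)"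

definition ELBO :: "'a measure \<Rightarrow> ('a \<Rightarrow> real) \<Rightarrow> ('a \<Rightarrow> real) \<Rightarrow> ('a \<Rightarrow> real) \<Rightarrow> real" where
  "ELBO M lik p q = (\<integral>x. q x * ln (lik x) \<partial>M) - KL_dens M q p"

text \<open>Mutual information of (g, x) for a joint density j g x on a finite set A times M
  (counting measure on A); marginals computed from the joint density.\<close>
definition mutual_info_dens :: "'g set \<Rightarrow> 'a measure \<Rightarrow> ('g \<Rightarrow> 'a \<Rightarrow> real) \<Rightarrow> real" where
  "mutual_info_dens A M j =
     (\<Sum>g\<in>A. \<integral>x. j g x * ln (j g x / ((\<integral>y. j g y \<partial>M) * (\<Sum>h\<in>A. j h x))) \<partial>M)"

end

theory Submission
  imports Defs
begin


lemma finite_coords: "finite (mlp_coords d L)"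
proof -
  have "mlp_coords d L \<subseteq> (\<lambda>(l,i,j). Wc l i j) ` (SIGMA l:{1..L}. SIGMA i:{..<d l}. {..<d (l-1)})
      \<union> (\<lambda>(l,i). Bc l i) ` (SIGMA l:{1..L}. {..<d l})"
    unfolding mlp_coords_def by (auto simp: image_iff)
  then show ?thesis by (rule finite_subset) simp
qed

lemma finite_G: "finite (perm_group d L)"
proof -
  let ?S = "PiE {..<L} (\<lambda>l. if 1 \<le> l \<and> l < L then {f. f permutes {..<d l}} else {id})"
  have fin: "finite ?S" by (intro finite_PiE) (auto simp: finite_permutations)
  have inj: "inj_on (\<lambda>\<tau>. restrict \<tau> {..<L}) (perm_group d L)"
  proof (rule inj_onI)
    fix x y assume x: "x \<in> perm_group d L" and y: "y \<in> perm_group d L"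
      and e: "restrict x {..<L} = restrict y {..<L}"
    show "x = y"
    proof
      fix l show "x l = y l"
      proof (cases "l < L")
        case True then show ?thesis using fun_cong[OF e, of l] by simp
      next
        case False then show ?thesis using x y unfolding perm_group_def by auto
      qed
    qed
  qed
  have "(\<lambda>\<tau>. restrict \<tau> {..<L}) ` perm_group d L \<subseteq> ?S"
    unfolding perm_group_def by (auto simp: PiE_iff)
  then have "finite ((\<lambda>\<tau>. restrict \<tau> {..<L}) ` perm_group d L)" using fin finite_subset by blast
  then show ?thesis using inj finite_imageD by blast
qed

lemma id_in_G: "(\<lambda>l. id) \<in> perm_group d L"
  unfolding perm_group_def by (auto simp: permutes_id)

lemma G_bij: "\<tau> \<in> perm_group d L \<Longrightarrow> bij (\<tau> l)"
proof -
  assume t: "\<tau> \<in> perm_group d L"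
  show "bij (\<tau> l)"
  proof (cases "1 \<le> l \<and> l < L")
    case True then show ?thesis using t unfolding perm_group_def by (blast intro: permutes_bij)
  next
    case False then show ?thesis using t unfolding perm_group_def by simp
  qed
qed

lemma perm_inv_G: "\<tau> \<in> perm_group d L \<Longrightarrow> perm_inv \<tau> \<in> perm_group d L"
  unfolding perm_group_def perm_inv_def by (auto simp: permutes_inv)

definition pic :: "(nat \<Rightarrow> nat \<Rightarrow> nat) \<Rightarrow> coord \<Rightarrow> coord" where
  "pic \<tau> c = (case c of Wc l i j \<Rightarrow> Wc l (\<tau> l i) (\<tau> (l - 1) j) | Bc l i \<Rightarrow> Bc l (\<tau> l i))"

lemma act_eq: "act d L \<tau> = (\<lambda>\<omega>. \<lambda>c\<in>mlp_coords d L. \<omega> (pic \<tau> c))"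
  unfolding act_def pic_def by (intro ext) (auto split: coord.splits)

lemma pic_inv: "\<tau> \<in> perm_group d L \<Longrightarrow> pic (perm_inv \<tau>) (pic \<tau> c) = c"
  unfolding pic_def perm_inv_def using G_bij[of \<tau> d L]
  by (auto split: coord.splits simp: bij_is_inj inv_f_f)

lemma G_range: "\<tau> \<in> perm_group d L \<Longrightarrow> 1 \<le> l \<Longrightarrow> l \<le> L \<Longrightarrow> i < d l \<Longrightarrow> \<tau> l i < d l"
proof -
  assume t: "\<tau> \<in> perm_group d L" and l: "1 \<le> l" "l \<le> L" and i: "i < d l"
  show "\<tau> l i < d l"
  proof (cases "l < L")
    case True
    then have "\<tau> l permutes {..<d l}" using t l unfolding perm_group_def by blast
    then show ?thesis using permutes_in_image[of "\<tau> l" "{..<d l}" i] i by simp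
  next
    case False then show ?thesis using t i unfolding perm_group_def by simp
  qed
qed

lemma G_range0: "\<tau> \<in> perm_group d L \<Longrightarrow> l \<le> L \<Longrightarrow> i < d l \<Longrightarrow> \<tau> l i < d l"
  by (cases "l = 0") (auto simp: perm_group_def intro: G_range)

lemma pic_in: "\<tau> \<in> perm_group d L \<Longrightarrow> c \<in> mlp_coords d L \<Longrightarrow> pic \<tau> c \<in> mlp_coords d L"
  unfolding pic_def mlp_coords_def using G_range0[of \<tau> d L]
  by (auto split: coord.splits)

lemma perm_inv_inv: "\<tau> \<in> perm_group d L \<Longrightarrow> perm_inv (perm_inv \<tau>) = \<tau>"
  unfolding perm_inv_def using G_bij by (auto simp: inv_inv_eq)

lemma pic_inv2: "\<tau> \<in> perm_group d L \<Longrightarrow> pic \<tau> (pic (perm_inv \<tau>) c) = c"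
  using pic_inv[OF perm_inv_G, of \<tau> d L c] perm_inv_inv[of \<tau> d L] by simp

lemma pic_bij: "\<tau> \<in> perm_group d L \<Longrightarrow> bij_betw (pic \<tau>) (mlp_coords d L) (mlp_coords d L)"
  apply (rule bij_betw_byWitness[where f'="pic (perm_inv \<tau>)"])
  using pic_inv pic_inv2 pic_in perm_inv_G
  by auto

lemma distr_reindex_lborel:
  assumes fin: "finite I" and t: "bij_betw t I I"
  shows "distr (PiM I (\<lambda>_. lborel)) (PiM I (\<lambda>_. lborel)) (\<lambda>\<omega>. \<lambda>n\<in>I. \<omega> (t n))
         = (PiM I (\<lambda>_. lborel) :: ('i \<Rightarrow> real) measure)"
proof (rule product_sigma_finite.PiM_eqI[OF _ fin])
  show "product_sigma_finite (\<lambda>_::'i. lborel::real measure)"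
    unfolding product_sigma_finite_def by (simp add: lborel.sigma_finite_measure_axioms)
  show "sets (distr (PiM I (\<lambda>_. lborel)) (PiM I (\<lambda>_. lborel)) (\<lambda>\<omega>. \<lambda>n\<in>I. \<omega> (t n)))
        = sets (PiM I (\<lambda>_. lborel::real measure))" by simp
  fix A assume A: "\<And>i. i\<in>I \<Longrightarrow> A i \<in> sets (lborel::real measure)"
  let ?T = "\<lambda>\<omega>::'i\<Rightarrow>real. \<lambda>n\<in>I. \<omega> (t n)"
  let ?s = "the_inv_into I t"
  have tI: "t \<in> I \<rightarrow> I" using t by (auto simp: bij_betw_def)
  have sb: "bij_betw ?s I I" using t by (rule bij_betw_the_inv_into)
  have meas: "?T \<in> measurable (PiM I (\<lambda>_. lborel)) (PiM I (\<lambda>_. lborel))"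
    using tI by (intro measurable_restrict measurable_component_singleton) auto
  have pre: "?T -` PiE I A \<inter> space (PiM I (\<lambda>_. lborel)) = PiE I (\<lambda>i. A (?s i))"
  proof (intro set_eqI iffI)
    fix \<omega> assume "\<omega> \<in> ?T -` PiE I A \<inter> space (PiM I (\<lambda>_. lborel))"
    then have w: "\<omega> \<in> PiE I (\<lambda>_. UNIV)" and h: "\<And>n. n \<in> I \<Longrightarrow> \<omega> (t n) \<in> A n"
      by (auto simp: space_PiM PiE_iff)
    show "\<omega> \<in> PiE I (\<lambda>i. A (?s i))"
    proof -
      have "\<omega> i \<in> A (?s i)" if "i \<in> I" for i
        using h[of "?s i"] that sb t by (simp add: bij_betwE f_the_inv_into_f_bij_betw)
      then show ?thesis using w by (auto simp: PiE_iff)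
    qed
  next
    fix \<omega> assume "\<omega> \<in> PiE I (\<lambda>i. A (?s i))"
    then have w: "\<omega> \<in> PiE I (\<lambda>_. UNIV)" and h: "\<And>i. i \<in> I \<Longrightarrow> \<omega> i \<in> A (?s i)"
      by (auto simp: PiE_iff)
    have "\<omega> (t n) \<in> A n" if "n \<in> I" for n
      using h[of "t n"] that t tI by (auto simp: the_inv_into_f_f bij_betw_def)
    then show "\<omega> \<in> ?T -` PiE I A \<inter> space (PiM I (\<lambda>_. lborel))"
      using w by (auto simp: space_PiM PiE_iff)
  qed
  have "emeasure (distr (PiM I (\<lambda>_. lborel)) (PiM I (\<lambda>_. lborel)) ?T) (PiE I A)
      = emeasure (PiM I (\<lambda>_. lborel)) (?T -` PiE I A \<inter> space (PiM I (\<lambda>_. lborel)))"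
    using A meas by (intro emeasure_distr) (auto intro!: sets_PiM_I_finite fin)
  also have "\<dots> = emeasure (PiM I (\<lambda>_. lborel)) (PiE I (\<lambda>i. A (?s i)))" by (simp add: pre)
  also have "\<dots> = (\<Prod>i\<in>I. emeasure lborel (A (?s i)))"
    using A sb fin by (intro product_sigma_finite.emeasure_PiM)
      (auto simp: product_sigma_finite_def lborel.sigma_finite_measure_axioms bij_betwE)
  also have "\<dots> = (\<Prod>i\<in>I. emeasure lborel (A i))"
    using sb by (rule prod.reindex_bij_betw)
  finally show "emeasure (distr (PiM I (\<lambda>_. lborel)) (PiM I (\<lambda>_. lborel)) ?T) (PiE I A)
      = (\<Prod>i\<in>I. emeasure lborel (A i))" .
qed


lemma act_meas: "\<sigma> \<in> perm_group d L \<Longrightarrow> act d L \<sigma> \<in> measurable (mlp_space d L) (mlp_space d L)"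
  unfolding act_eq mlp_space_def using pic_in
  by (intro measurable_restrict measurable_component_singleton) auto

lemma act_distr: "\<sigma> \<in> perm_group d L \<Longrightarrow> distr (mlp_space d L) (mlp_space d L) (act d L \<sigma>) = mlp_space d L"
  unfolding act_eq mlp_space_def by (rule distr_reindex_lborel[OF finite_coords pic_bij])

lemma act_integral:
  assumes "\<sigma> \<in> perm_group d L" "(f :: _ \<Rightarrow> real) \<in> borel_measurable (mlp_space d L)"
  shows "(\<integral>\<omega>. f (act d L \<sigma> \<omega>) \<partial>mlp_space d L) = integral\<^sup>L (mlp_space d L) f"
  using integral_distr[OF act_meas[OF assms(1)] assms(2)] act_distr[OF assms(1)] by simp

lemma act_integrable:
  assumes "\<sigma> \<in> perm_group d L" "(f :: _ \<Rightarrow> real) \<in> borel_measurable (mlp_space d L)"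
  shows "integrable (mlp_space d L) (\<lambda>\<omega>. f (act d L \<sigma> \<omega>)) = integrable (mlp_space d L) f"
  using integrable_distr_eq[OF act_meas[OF assms(1)] assms(2)] act_distr[OF assms(1)] by simp

lemma act_AE:
  assumes "\<sigma> \<in> perm_group d L" "{x \<in> space (mlp_space d L). P x} \<in> sets (mlp_space d L)"
  shows "(AE x in mlp_space d L. P (act d L \<sigma> x)) = (AE x in mlp_space d L. P x)"
proof -
  have "(AE x in distr (mlp_space d L) (mlp_space d L) (act d L \<sigma>). P x) = (AE x in mlp_space d L. P (act d L \<sigma> x))"
    by (rule AE_distr_iff[OF act_meas[OF assms(1)] assms(2)])
  then show ?thesis unfolding act_distr[OF assms(1)] by (rule sym)
qed

lemma act_space: "\<sigma> \<in> perm_group d L \<Longrightarrow> \<omega> \<in> space (mlp_space d L) \<Longrightarrow> act d L \<sigma> \<omega> \<in> space (mlp_space d L)"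
  by (rule measurable_space[OF act_meas])



theorem theorem4p1:
  fixes d :: "nat \<Rightarrow> nat" and L :: nat
    and p q lik :: "(coord \<Rightarrow> real) \<Rightarrow> real"
  defines "M \<equiv> mlp_space d L"
    and "G \<equiv> perm_group d L"
    and "qG \<equiv> sym_density d L q"
  assumes L: "1 \<le> L"
    and p_meas: "p \<in> borel_measurable M" and p_nonneg: "\<forall>\<omega>\<in>space M. 0 \<le> p \<omega>"
    and p_int: "integrable M p" and p_one: "(\<integral>\<omega>. p \<omega> \<partial>M) = 1"
    and p_inv: "G_invariant d L p"
    and q_meas: "q \<in> borel_measurable M" and q_nonneg: "\<forall>\<omega>\<in>space M. 0 \<le> q \<omega>"
    and q_int: "integrable M q" and q_one: "(\<integral>\<omega>. q \<omega> \<partial>M) = 1"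
    and lik_meas: "lik \<in> borel_measurable M" and lik_nonneg: "\<forall>\<omega>\<in>space M. 0 \<le> lik \<omega>"
    and lik_inv: "G_invariant d L lik"
    and fin_supp: "AE \<omega> in M. 0 < q \<omega> \<longrightarrow> 0 < p \<omega> \<and> 0 < lik \<omega>"
    and fin1: "integrable M (\<lambda>\<omega>. q \<omega> * ln (lik \<omega>))"
    and fin2: "integrable M (\<lambda>\<omega>. qG \<omega> * ln (lik \<omega>))"
    and fin3: "integrable M (\<lambda>\<omega>. q \<omega> * ln (q \<omega> / p \<omega>))"
    and fin4: "integrable M (\<lambda>\<omega>. qG \<omega> * ln (qG \<omega> / p \<omega>))"
    and fin5: "integrable M (\<lambda>\<omega>. q \<omega> * ln (q \<omega>))"
    and fin6: "integrable M (\<lambda>\<omega>. qG \<omega> * ln (qG \<omega>))"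
    and fin7: "\<forall>\<tau>\<in>G. integrable M (\<lambda>\<omega>. joint_density d L q \<tau> \<omega> *
                 ln (joint_density d L q \<tau> \<omega> /
                     ((\<integral>\<omega>'. joint_density d L q \<tau> \<omega>' \<partial>M) *
                      (\<Sum>\<sigma>\<in>G. joint_density d L q \<sigma> \<omega>))))"
  shows "ELBO M lik p qG = ELBO M lik p q + diff_entropy M qG - diff_entropy M q \<and>
         ELBO M lik p q + diff_entropy M qG - diff_entropy M q =
           ELBO M lik p q + mutual_info_dens G M (joint_density d L q)"
  proof -
  have finG: "finite G" unfolding G_def by (rule finite_G)
  have neG: "G \<noteq> {}" unfolding G_def using id_in_G by blast
  define n where "n = real (card G)"
  have npos: "n > 0" unfolding n_def using finG neG by (simp add: card_gt_0_iff)
  have pinvG: "\<And>\<tau>. \<tau> \<in> G \<Longrightarrow> perm_inv \<tau> \<in> G" unfolding G_def by (rule perm_inv_G)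
  have actM: "\<And>\<sigma>. \<sigma> \<in> G \<Longrightarrow> act d L \<sigma> \<in> measurable M M" unfolding G_def M_def by (rule act_meas)
  have intT: "\<And>\<sigma> f. \<sigma> \<in> G \<Longrightarrow> (f :: _ \<Rightarrow> real) \<in> borel_measurable M \<Longrightarrow>
      (\<integral>\<omega>. f (act d L \<sigma> \<omega>) \<partial>M) = integral\<^sup>L M f"
    unfolding G_def M_def by (rule act_integral)
  have ibT: "\<And>\<sigma> f. \<sigma> \<in> G \<Longrightarrow> (f :: _ \<Rightarrow> real) \<in> borel_measurable M \<Longrightarrow>
      integrable M (\<lambda>\<omega>. f (act d L \<sigma> \<omega>)) = integrable M f"
    unfolding G_def M_def by (rule act_integrable)
  have spT: "\<And>\<sigma> \<omega>. \<sigma> \<in> G \<Longrightarrow> \<omega> \<in> space M \<Longrightarrow> act d L \<sigma> \<omega> \<in> space M"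
    unfolding G_def M_def by (rule act_space)
  have AET: "\<And>\<sigma> P. \<sigma> \<in> G \<Longrightarrow> {x \<in> space M. P x} \<in> sets M \<Longrightarrow>
      (AE x in M. P (act d L \<sigma> x)) = (AE x in M. P x)"
    unfolding G_def M_def by (rule act_AE)
  have p_i: "\<And>\<sigma> \<omega>. \<sigma> \<in> G \<Longrightarrow> \<omega> \<in> space M \<Longrightarrow> p (act d L \<sigma> \<omega>) = p \<omega>"
    using p_inv unfolding G_invariant_def G_def M_def by blast
  have lik_i: "\<And>\<sigma> \<omega>. \<sigma> \<in> G \<Longrightarrow> \<omega> \<in> space M \<Longrightarrow> lik (act d L \<sigma> \<omega>) = lik \<omega>"
    using lik_inv unfolding G_invariant_def G_def M_def by blast
  define qs where "qs \<tau> \<omega> = q (act d L (perm_inv \<tau>) \<omega>)" for \<tau> \<omega>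
  have qs_meas: "\<And>\<tau>. \<tau> \<in> G \<Longrightarrow> qs \<tau> \<in> borel_measurable M"
    unfolding qs_def using measurable_compose[OF actM[OF pinvG] q_meas] by simp
  have qs_nn: "\<And>\<tau> \<omega>. \<tau> \<in> G \<Longrightarrow> \<omega> \<in> space M \<Longrightarrow> 0 \<le> qs \<tau> \<omega>"
    unfolding qs_def using q_nonneg spT pinvG by blast
  have qG_eq: "\<And>\<omega>. qG \<omega> = (\<Sum>\<tau>\<in>G. qs \<tau> \<omega>) / n"
    unfolding qG_def sym_density_def qs_def n_def G_def by simp
  have qG_meas: "qG \<in> borel_measurable M"
    unfolding qG_eq[abs_def] using qs_meas by measurable
  have qG_nn: "\<And>\<omega>. \<omega> \<in> space M \<Longrightarrow> 0 \<le> qG \<omega>"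
    unfolding qG_eq using qs_nn npos by (simp add: sum_nonneg)
  have qs_le: "\<And>\<tau> \<omega>. \<tau> \<in> G \<Longrightarrow> \<omega> \<in> space M \<Longrightarrow> qs \<tau> \<omega> \<le> n * qG \<omega>"
  proof -
    fix \<tau> \<omega> assume t: "\<tau> \<in> G" and w: "\<omega> \<in> space M"
    have "qs \<tau> \<omega> \<le> (\<Sum>\<tau>\<in>G. qs \<tau> \<omega>)"
      using t w finG qs_nn by (intro member_le_sum) auto
    then show "qs \<tau> \<omega> \<le> n * qG \<omega>" unfolding qG_eq using npos by simp
  qed
  have transport: "integrable M (\<lambda>\<omega>. qG \<omega> * h \<omega>) \<and> (\<integral>\<omega>. qG \<omega> * h \<omega> \<partial>M) = (\<integral>\<omega>. q \<omega> * h \<omega> \<partial>M)"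
    if h_meas: "h \<in> borel_measurable M" and h_i: "\<And>\<sigma> \<omega>. \<sigma> \<in> G \<Longrightarrow> \<omega> \<in> space M \<Longrightarrow> h (act d L \<sigma> \<omega>) = h \<omega>"
      and h_int: "integrable M (\<lambda>\<omega>. q \<omega> * h \<omega>)" for h
  proof -
    have fm: "(\<lambda>\<omega>. q \<omega> * h \<omega>) \<in> borel_measurable M" using q_meas h_meas by measurable
    have eqs: "\<And>\<tau> \<omega>. \<tau> \<in> G \<Longrightarrow> \<omega> \<in> space M \<Longrightarrow> qs \<tau> \<omega> * h \<omega> = (\<lambda>x. q x * h x) (act d L (perm_inv \<tau>) \<omega>)"
      unfolding qs_def using h_i pinvG by simp
    have i1: "integrable M (\<lambda>\<omega>. qs \<tau> \<omega> * h \<omega>)" if t: "\<tau> \<in> G" for \<tau>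
    proof -
      have "integrable M (\<lambda>\<omega>. (\<lambda>x. q x * h x) (act d L (perm_inv \<tau>) \<omega>))"
        using ibT[OF pinvG[OF t] fm] h_int by simp
      moreover have "integrable M (\<lambda>\<omega>. qs \<tau> \<omega> * h \<omega>) = integrable M (\<lambda>\<omega>. (\<lambda>x. q x * h x) (act d L (perm_inv \<tau>) \<omega>))"
        by (rule Bochner_Integration.integrable_cong) (simp_all add: eqs[OF t])
      ultimately show ?thesis by simp
    qed
    have i2: "(\<integral>\<omega>. qs \<tau> \<omega> * h \<omega> \<partial>M) = (\<integral>\<omega>. q \<omega> * h \<omega> \<partial>M)" if t: "\<tau> \<in> G" for \<tau>
    proof -
      have "(\<integral>\<omega>. qs \<tau> \<omega> * h \<omega> \<partial>M) = (\<integral>\<omega>. (\<lambda>x. q x * h x) (act d L (perm_inv \<tau>) \<omega>) \<partial>M)"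
        by (rule Bochner_Integration.integral_cong) (simp_all add: eqs[OF t])
      also have "\<dots> = (\<integral>\<omega>. q \<omega> * h \<omega> \<partial>M)" by (rule intT[OF pinvG[OF t] fm])
      finally show ?thesis .
    qed
    have e: "\<And>\<omega>. qG \<omega> * h \<omega> = (\<Sum>\<tau>\<in>G. qs \<tau> \<omega> * h \<omega>) / n"
      unfolding qG_eq by (simp add: sum_distrib_right)
    have "integrable M (\<lambda>\<omega>. (\<Sum>\<tau>\<in>G. qs \<tau> \<omega> * h \<omega>) / n)" using i1 by auto
    moreover have "(\<integral>\<omega>. (\<Sum>\<tau>\<in>G. qs \<tau> \<omega> * h \<omega>) / n \<partial>M) = (\<integral>\<omega>. q \<omega> * h \<omega> \<partial>M)"
      using i1 i2 npos by (simp add: integral_sum n_def)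
    ultimately show ?thesis unfolding e by simp
  qed
  have A: "(\<integral>\<omega>. qG \<omega> * ln (lik \<omega>) \<partial>M) = (\<integral>\<omega>. q \<omega> * ln (lik \<omega>) \<partial>M)"
    using transport[of "\<lambda>\<omega>. ln (lik \<omega>)"] lik_meas lik_i fin1 by auto
  have AEq: "AE \<omega> in M. q \<omega> * ln (q \<omega> / p \<omega>) = q \<omega> * ln (q \<omega>) - q \<omega> * ln (p \<omega>)"
    using fin_supp
  proof (rule AE_mp)
    show "AE \<omega> in M. (0 < q \<omega> \<longrightarrow> 0 < p \<omega> \<and> 0 < lik \<omega>) \<longrightarrow>
        q \<omega> * ln (q \<omega> / p \<omega>) = q \<omega> * ln (q \<omega>) - q \<omega> * ln (p \<omega>)"
    proof (rule AE_I2)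
      fix \<omega> assume w: "\<omega> \<in> space M"
      show "(0 < q \<omega> \<longrightarrow> 0 < p \<omega> \<and> 0 < lik \<omega>) \<longrightarrow>
        q \<omega> * ln (q \<omega> / p \<omega>) = q \<omega> * ln (q \<omega>) - q \<omega> * ln (p \<omega>)"
        using q_nonneg w by (cases "q \<omega> = 0") (auto simp: ln_div algebra_simps)
    qed
  qed
  have qlnp_int: "integrable M (\<lambda>\<omega>. q \<omega> * ln (p \<omega>))"
  proof -
    have i: "integrable M (\<lambda>\<omega>. q \<omega> * ln (q \<omega>) - q \<omega> * ln (q \<omega> / p \<omega>))" using fin5 fin3 by auto
    have ae: "AE \<omega> in M. q \<omega> * ln (q \<omega>) - q \<omega> * ln (q \<omega> / p \<omega>) = q \<omega> * ln (p \<omega>)"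
      using AEq by eventually_elim simp
    have m: "(\<lambda>\<omega>. q \<omega> * ln (p \<omega>)) \<in> borel_measurable M" using q_meas p_meas by measurable
    show ?thesis by (rule integrable_cong_AE_imp[OF i m ae])
  qed
  have Bq: "(\<integral>\<omega>. q \<omega> * ln (q \<omega> / p \<omega>) \<partial>M) = (\<integral>\<omega>. q \<omega> * ln (q \<omega>) \<partial>M) - (\<integral>\<omega>. q \<omega> * ln (p \<omega>) \<partial>M)"
  proof -
    have "(\<integral>\<omega>. q \<omega> * ln (q \<omega> / p \<omega>) \<partial>M) = (\<integral>\<omega>. q \<omega> * ln (q \<omega>) - q \<omega> * ln (p \<omega>) \<partial>M)"
    proof (rule integral_cong_AE[OF _ _ AEq])
      show "(\<lambda>\<omega>. q \<omega> * ln (q \<omega> / p \<omega>)) \<in> borel_measurable M" using q_meas p_meas by measurable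
      show "(\<lambda>\<omega>. q \<omega> * ln (q \<omega>) - q \<omega> * ln (p \<omega>)) \<in> borel_measurable M" using q_meas p_meas by measurable
    qed
    then show ?thesis using fin5 qlnp_int by simp
  qed
  have tp: "integrable M (\<lambda>\<omega>. qG \<omega> * ln (p \<omega>)) \<and> (\<integral>\<omega>. qG \<omega> * ln (p \<omega>) \<partial>M) = (\<integral>\<omega>. q \<omega> * ln (p \<omega>) \<partial>M)"
    using transport[of "\<lambda>\<omega>. ln (p \<omega>)"] p_meas p_i qlnp_int by auto
  have AEsupp_s: "AE \<omega> in M. 0 < qs \<tau> \<omega> \<longrightarrow> 0 < p \<omega>" if t: "\<tau> \<in> G" for \<tau>
  proof -
    have "AE \<omega> in M. 0 < q \<omega> \<longrightarrow> 0 < p \<omega>" using fin_supp by eventually_elim auto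
    then have "AE \<omega> in M. 0 < q (act d L (perm_inv \<tau>) \<omega>) \<longrightarrow> 0 < p (act d L (perm_inv \<tau>) \<omega>)"
      using AET[OF pinvG[OF t], of "\<lambda>x. 0 < q x \<longrightarrow> 0 < p x"] q_meas p_meas by auto
    then show ?thesis
    proof (rule AE_mp[OF _ AE_I2])
      fix \<omega> assume "\<omega> \<in> space M"
      then show "(0 < q (act d L (perm_inv \<tau>) \<omega>) \<longrightarrow> 0 < p (act d L (perm_inv \<tau>) \<omega>)) \<longrightarrow>
          (0 < qs \<tau> \<omega> \<longrightarrow> 0 < p \<omega>)"
        unfolding qs_def using p_i[OF pinvG[OF t]] by simp
    qed
  qed
  have AEsupp: "AE \<omega> in M. 0 < qG \<omega> \<longrightarrow> 0 < p \<omega>"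
  proof -
    have "AE \<omega> in M. \<forall>\<tau>\<in>G. 0 < qs \<tau> \<omega> \<longrightarrow> 0 < p \<omega>"
      using finG AEsupp_s by (rule AE_finite_allI)
    then show ?thesis
    proof (rule AE_mp[OF _ AE_I2])
      fix \<omega> assume w: "\<omega> \<in> space M"
      show "(\<forall>\<tau>\<in>G. 0 < qs \<tau> \<omega> \<longrightarrow> 0 < p \<omega>) \<longrightarrow> 0 < qG \<omega> \<longrightarrow> 0 < p \<omega>"
      proof (intro impI)
        assume H: "\<forall>\<tau>\<in>G. 0 < qs \<tau> \<omega> \<longrightarrow> 0 < p \<omega>" and pos: "0 < qG \<omega>"
        show "0 < p \<omega>"
        proof (rule ccontr)
          assume "\<not> 0 < p \<omega>"
          then have "\<forall>\<tau>\<in>G. qs \<tau> \<omega> = 0" using H qs_nn w by force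
          then have "qG \<omega> = 0" unfolding qG_eq by simp
          then show False using pos by simp
        qed
      qed
    qed
  qed
  have AEqG: "AE \<omega> in M. qG \<omega> * ln (qG \<omega> / p \<omega>) = qG \<omega> * ln (qG \<omega>) - qG \<omega> * ln (p \<omega>)"
    using AEsupp
  proof (rule AE_mp[OF _ AE_I2])
    fix \<omega> assume w: "\<omega> \<in> space M"
    show "(0 < qG \<omega> \<longrightarrow> 0 < p \<omega>) \<longrightarrow> qG \<omega> * ln (qG \<omega> / p \<omega>) = qG \<omega> * ln (qG \<omega>) - qG \<omega> * ln (p \<omega>)"
      using qG_nn[OF w] by (cases "qG \<omega> = 0") (auto simp: ln_div algebra_simps)
  qed
  have BqG: "(\<integral>\<omega>. qG \<omega> * ln (qG \<omega> / p \<omega>) \<partial>M) = (\<integral>\<omega>. qG \<omega> * ln (qG \<omega>) \<partial>M) - (\<integral>\<omega>. qG \<omega> * ln (p \<omega>) \<partial>M)"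
  proof -
    have "(\<integral>\<omega>. qG \<omega> * ln (qG \<omega> / p \<omega>) \<partial>M) = (\<integral>\<omega>. qG \<omega> * ln (qG \<omega>) - qG \<omega> * ln (p \<omega>) \<partial>M)"
    proof (rule integral_cong_AE[OF _ _ AEqG])
      show "(\<lambda>\<omega>. qG \<omega> * ln (qG \<omega> / p \<omega>)) \<in> borel_measurable M" using qG_meas p_meas by measurable
      show "(\<lambda>\<omega>. qG \<omega> * ln (qG \<omega>) - qG \<omega> * ln (p \<omega>)) \<in> borel_measurable M" using qG_meas p_meas by measurable
    qed
    then show ?thesis using fin6 tp by simp
  qed
  have part1: "ELBO M lik p qG = ELBO M lik p q + diff_entropy M qG - diff_entropy M q"
    unfolding ELBO_def KL_dens_def diff_entropy_def using A Bq BqG tp by simp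
  define F where "F \<tau> \<omega> = joint_density d L q \<tau> \<omega> *
                 ln (joint_density d L q \<tau> \<omega> /
                     ((\<integral>\<omega>'. joint_density d L q \<tau> \<omega>' \<partial>M) *
                      (\<Sum>\<sigma>\<in>G. joint_density d L q \<sigma> \<omega>)))" for \<tau> \<omega>
  have jd: "\<And>\<tau> \<omega>. joint_density d L q \<tau> \<omega> = qs \<tau> \<omega> / n"
    unfolding joint_density_def qs_def n_def G_def by simp
  have cint: "(\<integral>\<omega>'. joint_density d L q \<tau> \<omega>' \<partial>M) = 1 / n" if t: "\<tau> \<in> G" for \<tau>
    unfolding jd qs_def using intT[OF pinvG[OF t] q_meas] q_one by simp
  have sumj: "\<And>\<omega>. (\<Sum>\<sigma>\<in>G. joint_density d L q \<sigma> \<omega>) = qG \<omega>"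
    unfolding jd qG_eq by (simp add: sum_divide_distrib)
  have Feq: "F \<tau> \<omega> = (qs \<tau> \<omega> * ln (qs \<tau> \<omega>) - qs \<tau> \<omega> * ln (qG \<omega>)) / n"
    if t: "\<tau> \<in> G" and w: "\<omega> \<in> space M" for \<tau> \<omega>
  proof (cases "qs \<tau> \<omega> = 0")
    case True then show ?thesis unfolding F_def jd by simp
  next
    case False
    then have qp: "qs \<tau> \<omega> > 0" using qs_nn[OF t w] by simp
    then have gp: "qG \<omega> > 0" using qs_le[OF t w] npos
      by (metis less_le_trans mult_pos_pos zero_less_mult_pos)
    have "F \<tau> \<omega> = qs \<tau> \<omega> / n * ln ((qs \<tau> \<omega> / n) / (1 / n * qG \<omega>))"
      unfolding F_def cint[OF t] sumj by (simp only: jd)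
    also have "(qs \<tau> \<omega> / n) / (1 / n * qG \<omega>) = qs \<tau> \<omega> / qG \<omega>" using npos by (simp add: field_simps)
    finally show ?thesis using qp gp by (simp add: ln_div algebra_simps diff_divide_distrib)
  qed
  have qslnqs: "integrable M (\<lambda>\<omega>. qs \<tau> \<omega> * ln (qs \<tau> \<omega>)) \<and>
      (\<integral>\<omega>. qs \<tau> \<omega> * ln (qs \<tau> \<omega>) \<partial>M) = (\<integral>\<omega>. q \<omega> * ln (q \<omega>) \<partial>M)" if t: "\<tau> \<in> G" for \<tau>
  proof -
    have fm: "(\<lambda>x. q x * ln (q x)) \<in> borel_measurable M" using q_meas by measurable
    show ?thesis unfolding qs_def using ibT[OF pinvG[OF t] fm] intT[OF pinvG[OF t] fm] fin5 by simp
  qed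
  have Fint: "integrable M (F \<tau>)" if t: "\<tau> \<in> G" for \<tau>
    using fin7 t unfolding F_def[abs_def] by blast
  have e2: "\<And>\<tau> \<omega>. \<tau> \<in> G \<Longrightarrow> \<omega> \<in> space M \<Longrightarrow>
      qs \<tau> \<omega> * ln (qG \<omega>) = qs \<tau> \<omega> * ln (qs \<tau> \<omega>) - n * F \<tau> \<omega>"
    using Feq npos by simp
  have lnG_int: "integrable M (\<lambda>\<omega>. qs \<tau> \<omega> * ln (qG \<omega>))" if t: "\<tau> \<in> G" for \<tau>
  proof -
    have "integrable M (\<lambda>\<omega>. qs \<tau> \<omega> * ln (qs \<tau> \<omega>) - n * F \<tau> \<omega>)"
      using qslnqs[OF t] Fint[OF t] by auto
    moreover have "integrable M (\<lambda>\<omega>. qs \<tau> \<omega> * ln (qG \<omega>)) = integrable M (\<lambda>\<omega>. qs \<tau> \<omega> * ln (qs \<tau> \<omega>) - n * F \<tau> \<omega>)"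
      by (rule Bochner_Integration.integrable_cong) (simp_all add: e2[OF t])
    ultimately show ?thesis by simp
  qed
  have Fi: "integral\<^sup>L M (F \<tau>) = ((\<integral>\<omega>. q \<omega> * ln (q \<omega>) \<partial>M) - (\<integral>\<omega>. qs \<tau> \<omega> * ln (qG \<omega>) \<partial>M)) / n"
    if t: "\<tau> \<in> G" for \<tau>
  proof -
    have "integral\<^sup>L M (F \<tau>) = (\<integral>\<omega>. (qs \<tau> \<omega> * ln (qs \<tau> \<omega>) - qs \<tau> \<omega> * ln (qG \<omega>)) / n \<partial>M)"
      by (rule Bochner_Integration.integral_cong) (simp_all add: Feq[OF t])
    also have "\<dots> = ((\<integral>\<omega>. qs \<tau> \<omega> * ln (qs \<tau> \<omega>) \<partial>M) - (\<integral>\<omega>. qs \<tau> \<omega> * ln (qG \<omega>) \<partial>M)) / n"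
      using qslnqs[OF t] lnG_int[OF t] by simp
    finally show ?thesis using qslnqs[OF t] by simp
  qed
  have qGln: "(\<integral>\<omega>. qG \<omega> * ln (qG \<omega>) \<partial>M) = (\<Sum>\<tau>\<in>G. (\<integral>\<omega>. qs \<tau> \<omega> * ln (qG \<omega>) \<partial>M)) / n"
  proof -
    have "(\<integral>\<omega>. qG \<omega> * ln (qG \<omega>) \<partial>M) = (\<integral>\<omega>. (\<Sum>\<tau>\<in>G. qs \<tau> \<omega> * ln (qG \<omega>)) / n \<partial>M)"
      by (rule Bochner_Integration.integral_cong) (auto simp: qG_eq[of "\<omega>" for \<omega>] sum_distrib_right)
    also have "\<dots> = (\<Sum>\<tau>\<in>G. (\<integral>\<omega>. qs \<tau> \<omega> * ln (qG \<omega>) \<partial>M)) / n"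
      using lnG_int by (simp add: integral_sum)
    finally show ?thesis .
  qed
  have MI: "mutual_info_dens G M (joint_density d L q) = (\<integral>\<omega>. q \<omega> * ln (q \<omega>) \<partial>M) - (\<integral>\<omega>. qG \<omega> * ln (qG \<omega>) \<partial>M)"
  proof -
    have "mutual_info_dens G M (joint_density d L q) = (\<Sum>\<tau>\<in>G. integral\<^sup>L M (F \<tau>))"
      unfolding mutual_info_dens_def F_def ..
    also have "\<dots> = (\<Sum>\<tau>\<in>G. ((\<integral>\<omega>. q \<omega> * ln (q \<omega>) \<partial>M) - (\<integral>\<omega>. qs \<tau> \<omega> * ln (qG \<omega>) \<partial>M)) / n)"
      using Fi by (rule sum.cong[OF refl])
    also have "\<dots> = (\<integral>\<omega>. q \<omega> * ln (q \<omega>) \<partial>M) - (\<Sum>\<tau>\<in>G. (\<integral>\<omega>. qs \<tau> \<omega> * ln (qG \<omega>) \<partial>M)) / n"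
      using npos by (simp add: sum_divide_distrib[symmetric] sum_subtractf n_def diff_divide_distrib)
    finally show ?thesis using qGln by simp
  qed
  have part2: "ELBO M lik p q + diff_entropy M qG - diff_entropy M q =
           ELBO M lik p q + mutual_info_dens G M (joint_density d L q)"
    unfolding MI diff_entropy_def by simp
  show ?thesis using part1 part2 by blast
qed

end
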